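(* Let $f:\mathbb{C}^n\to\mathbb{R}\cup\{+\infty\}$ be a proper closed convex function (with $\mathbb{C}^n$ viewed as the real Euclidean space $\mathbb{R}^{2n}$ with inner product $\mathrm{Re}\,\mathbf{a}^\dagger\mathbf{b}$), let $\mathbf{D}\in\mathbb{C}^{m\times n}$, $\mathbf{b}\in\mathbb{C}^m$, and consider the problem $\min_{\mathbf{u}\in\mathbb{C}^n} f(\mathbf{u})$ s.t. $\mathbf{D}\mathbf{u}=\mathbf{b}$. Assume this problem admits a KKT pair, i.e. there exist $\mathbf{u}^\star\in\mathbb{C}^n$, $\bm\lambda^\star\in\mathbb{C}^m$ with $\mathbf{D}\mathbf{u}^\star=\mathbf{b}$ and $\mathbf{0}\in\partial f(\mathbf{u}^\star)+\mathbf{D}^\dagger\bm\lambda^\star$. Let $\{\omega_t\}_{t\ge 0}\subset(0,1]$ satisfy $\omega_0=1$ and $\sum_{t=0}^{\infty}\omega_t<+\infty$. Then, for any initial data $\mathbf{u}^0\in\mathbb{C}^n$, $\bm\lambda^0\in\mathbb{C}^m$, $\tau_{-1}>0$, $\theta>0$, $0<\underline{\eta}<\overline{\eta}$, the sequence $\{\mathbf{u}^t\}$ generated by the ABAL method (defined in the context) converges to an optimal solution $\mathbf{u}^*$ of the problem $\min f(\mathbf{u})$ s.t. $\mathbf{D}\mathbf{u}=\mathbf{b}$.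
   Context: For $\tau>0$, $\mathrm{prox}_{\tau f}(\mathbf{v}):=\arg\min_{\mathbf{u}\in\mathbb{C}^n}\{f(\mathbf{u})+\frac{1}{2\tau}\|\mathbf{u}-\mathbf{v}\|^2\}$. For real $a<c$, $\mathrm{proj}_{[a,c]}(s)=\min\{\max\{s,a\},c\}$ (with $\mathrm{proj}_{[a,c]}(+\infty)=c$). The ABAL method, given $\mathbf{u}^0,\bm\lambda^0,\{\omega_t\}$, an initial stepsize $\tau_{-1}>0$, $\theta>0$ and $0<\underline{\eta}<\overline{\eta}$, generates for $t=0,1,2,\dots$: $\widetilde{\mathbf{u}}^t=\mathbf{u}^t-\tau_{t-1}\mathbf{D}^\dagger\bm\lambda^t$, $\mathbf{u}^{t+1}=\mathrm{prox}_{\tau_{t-1}f}(\widetilde{\mathbf{u}}^t)$; $\eta_t=\mathrm{proj}_{[\underline{\eta},\overline{\eta}]}\big(\|\mathbf{u}^{t+1}\|/\|(\mathbf{u}^{t+1}-\widetilde{\mathbf{u}}^t;\ \theta\tau_{t-1}\bm\lambda^t)\|\big)$, where $(\mathbf{a};\mathbf{c})$ denotes the stacked vector and the ratio is interpreted as $+\infty$ if its denominator is zero and its numerator is positive, and as $0$ if the numerator is zero; $\kappa_t=1-\omega_t+\omega_t\eta_t$, $\tau_t=\kappa_t\tau_{t-1}$; $\mathbf{p}^{t+1}=\mathbf{D}\big(\mathbf{u}^{t+1}+\kappa_t(\mathbf{u}^{t+1}-\mathbf{u}^t)\big)-\mathbf{b}$; $\bm\lambda^{t+1}=\bm\lambda^t+\tau_t^{-1}(\mathbf{D}\mathbf{D}^\dagger+\theta^2\mathbf{I})^{-1}\mathbf{p}^{t+1}$.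 Here $\mathbf{D}^\dagger$ is the conjugate transpose and $\|\cdot\|$ the Euclidean norm. *)

theory Defs
  imports "HOL-Analysis.Analysis"
begin

text \<open>Complex vectors in C^n are modelled as complex ^ 'n; the real inner product
  of HOL-Analysis on this type is exactly Re (a^dagger b), and norm is the Euclidean norm.\<close>

definition cadj :: "complex ^ 'n ^ 'm \<Rightarrow> complex ^ 'm ^ 'n" where
  "cadj D = (\<chi> i j. cnj (D $ j $ i))"

definition proper_fun :: "('a \<Rightarrow> ereal) \<Rightarrow> bool" where
  "proper_fun f \<longleftrightarrow> (\<forall>u. f u \<noteq> -\<infinity>) \<and> (\<exists>u. f u < \<infinity>)"

definition convex_fun :: "('a::real_vector \<Rightarrow> ereal) \<Rightarrow> bool" where
  "convex_fun f \<longleftrightarrow> (\<forall>x y a. 0 \<le> a \<and> a \<le> 1 \<longrightarrow>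
      f (a *\<^sub>R x + (1 - a) *\<^sub>R y) \<le> ereal a * f x + ereal (1 - a) * f y)"

definition closed_fun :: "('a::topological_space \<Rightarrow> ereal) \<Rightarrow> bool" where
  "closed_fun f \<longleftrightarrow> closed {(u, r::real). f u \<le> ereal r}"

definition subdiff :: "('a::real_inner \<Rightarrow> ereal) \<Rightarrow> 'a \<Rightarrow> 'a set" where
  "subdiff f u = {g. f u < \<infinity> \<and> (\<forall>v. f v \<ge> f u + ereal (g \<bullet> (v - u)))}"

definition prox :: "real \<Rightarrow> ('a::real_normed_vector \<Rightarrow> ereal) \<Rightarrow> 'a \<Rightarrow> 'a" where
  "prox \<tau> f v = (THE u. \<forall>w. f u + ereal (norm (u - v) ^ 2 / (2 * \<tau>))
                           \<le> f w + ereal (norm (w - v) ^ 2 / (2 * \<tau>)))"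

text \<open>proj_[a,c] of the ratio num/den, with num/den read as +infinity if den = 0 < num,
  and as 0 if num = 0.\<close>
definition proj_ratio :: "real \<Rightarrow> real \<Rightarrow> real \<Rightarrow> real \<Rightarrow> real" where
  "proj_ratio a c num den =
     (if num = 0 then min (max 0 a) c
      else if den = 0 then c
      else min (max (num / den) a) c)"

end

theory Submission
  imports Defs
begin

lemma inner_complex_Re: "inner (a::complex) b = Re (a * cnj b)"
  by (simp add: inner_complex_def)

lemma mv_scaleR: "(D::complex^'n^'m) *v (c *\<^sub>R x) = c *\<^sub>R (D *v x)"
  by (simp add: vec_eq_iff matrix_vector_mult_def scaleR_sum_right)

lemma mv_add: "(D::complex^'n^'m) *v (x + y) = D *v x + D *v y"
  by (simp add: matrix_vector_right_distrib)

lemma mv_diff: "(D::complex^'n^'m) *v (x - y) = D *v x - D *v y"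
  by (simp add: vec_eq_iff matrix_vector_mult_def sum_subtractf algebra_simps)

lemma mv_linear: "linear (\<lambda>x. (D::complex^'n^'m) *v x)"
  by (rule linearI) (simp_all add: mv_add mv_scaleR)

lemma mv_bounded: "\<exists>K>0. \<forall>x. norm ((D::complex^'n^'m) *v x) \<le> norm x * K"
  using bounded_linear.pos_bounded[OF linear_conv_bounded_linear[THEN iffD1, OF mv_linear]] by blast

lemma adjoint: "inner ((D::complex^'n^'m) *v x) y = inner x (cadj D *v y)"
proof -
  have "inner (D *v x) y = (\<Sum>j\<in>UNIV. Re ((\<Sum>i\<in>UNIV. D$j$i * x$i) * cnj (y$j)))"
    by (simp add: inner_vec_def inner_complex_Re matrix_vector_mult_def)
  also have "\<dots> = Re (\<Sum>j\<in>UNIV. \<Sum>i\<in>UNIV. D$j$i * x$i * cnj (y$j))"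
    by (simp add: sum_distrib_right Re_sum)
  also have "\<dots> = Re (\<Sum>i\<in>UNIV. \<Sum>j\<in>UNIV. x$i * (D$j$i * cnj (y$j)))"
    by (subst sum.swap) (simp add: algebra_simps)
  also have "\<dots> = (\<Sum>i\<in>UNIV. Re (x$i * cnj (\<Sum>j\<in>UNIV. cnj (D$j$i) * y$j)))"
    by (simp add: sum_distrib_left Re_sum)
  also have "\<dots> = inner x (cadj D *v y)"
    by (simp add: inner_vec_def inner_complex_Re matrix_vector_mult_def cadj_def)
  finally show ?thesis .
qed

lemma scaleR_mat1_mv: "((c::real) *\<^sub>R mat 1 :: complex^'m^'m) *v y = c *\<^sub>R y"
proof -
  have "\<And>i j. ((c *\<^sub>R mat 1 :: complex^'m^'m) $ i $ j) * y $ j = (if i = j then c *\<^sub>R y $ j else 0)"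
    by (simp add: mat_def)
  then show ?thesis by (simp add: vec_eq_iff matrix_vector_mult_def sum.delta)
qed

lemma Mmv: "((D::complex^'n^'m) ** cadj D + of_real (\<theta>^2) *\<^sub>R mat 1) *v y
   = D *v (cadj D *v y) + (\<theta>^2) *\<^sub>R y"
  by (simp add: matrix_vector_mult_add_rdistrib matrix_vector_mul_assoc scaleR_mat1_mv)

lemma Minner: "inner (((D::complex^'n^'m) ** cadj D + of_real (\<theta>^2) *\<^sub>R mat 1) *v y) y
   = (norm (cadj D *v y))^2 + \<theta>^2 * (norm y)^2"
  unfolding Mmv by (simp add: inner_add_left adjoint[of D "cadj D *v y" y] power2_norm_eq_inner)

lemma Minv:
  assumes "\<theta> > 0"
  shows "((D::complex^'n^'m) ** cadj D + of_real (\<theta>^2) *\<^sub>R mat 1) *v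
     (matrix_inv (D ** cadj D + of_real (\<theta>^2) *\<^sub>R mat 1) *v p) = p"
proof -
  let ?M = "(D::complex^'n^'m) ** cadj D + of_real (\<theta>^2) *\<^sub>R mat 1"
  have "\<forall>x. ?M *v x = 0 \<longrightarrow> x = 0"
  proof (intro allI impI)
    fix x assume "?M *v x = 0"
    then have "inner (?M *v x) x = 0" by simp
    then have "(norm (cadj D *v x))^2 + \<theta>^2 * (norm x)^2 = 0" by (simp only: Minner)
    moreover have "\<theta>^2 > 0" using assms by simp
    ultimately show "x = 0"
      by (smt (verit, best) mult_pos_pos norm_eq_zero zero_less_norm_iff zero_less_power2 zero_le_power2)
  qed
  then have "invertible ?M"
    using matrix_left_invertible_ker invertible_left_inverse by blast
  then have "?M ** matrix_inv ?M = mat 1"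
    unfolding invertible_def matrix_inv_def by (rule someI_ex[THEN conjunct1])
  then show ?thesis by (metis matrix_vector_mul_assoc matrix_vector_mul_lid)
qed

lemma parallelogram_half:
  fixes x y :: "'a::real_inner"
  shows "(norm ((1/2) *\<^sub>R x + (1/2) *\<^sub>R y))^2 = ((norm x)^2 + (norm y)^2)/2 - (norm (x - y))^2/4"
  apply (simp add: power2_norm_eq_inner inner_add_left inner_add_right inner_diff_left inner_diff_right inner_commute algebra_simps)
  apply (simp add: field_simps)
  done

lemma norm_sq_shift:
  fixes x y :: "'a::real_inner"
  shows "(norm (x + a *\<^sub>R y))^2 = (norm x)^2 + 2*a*inner x y + a^2 * (norm y)^2"
  unfolding power2_norm_eq_inner by (simp add: inner_add_left inner_add_right inner_commute power2_eq_square algebra_simps)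

lemma ereal_add_lt_le:
  assumes "(z::ereal) + ereal q < ereal r" shows "z \<le> ereal (r - q)"
  using assms by (cases z) auto

lemma lin3: "F1 + a \<le> (F1 + F2)/2 + m \<Longrightarrow> m = (a + b)/2 - X \<Longrightarrow> F1 + a = F2 + b \<Longrightarrow> X \<le> (0::real)"
  by (simp add: field_simps)

lemma prox_exists_unique:
  fixes f :: "'a::euclidean_space \<Rightarrow> ereal"
  assumes prp: "proper_fun f" and cl: "closed_fun f" and cv: "convex_fun f" and tau: "\<tau> > 0"
    and minor: "\<And>w. f w \<ge> ereal (c + inner g w)"
  shows "\<exists>!u. \<forall>w. f u + ereal ((norm (u - v))^2 / (2*\<tau>)) \<le> f w + ereal ((norm (w - v))^2 / (2*\<tau>))"
proof -
  define \<phi> where "\<phi> w = f w + ereal ((norm (w - v))^2 / (2*\<tau>))" for w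
  define L where "L = c + inner g v - \<tau> * (norm g)^2"
  have lb: "\<phi> w \<ge> ereal (L + (norm (w - v))^2 / (4*\<tau>))" for w
  proof -
    have "ereal (c + inner g w + (norm (w - v))^2 / (2*\<tau>)) \<le> \<phi> w"
      unfolding \<phi>_def using add_mono[OF minor[of w] order_refl, of "ereal ((norm (w - v))^2 / (2*\<tau>))"] by simp
    moreover have "L + (norm (w - v))^2 / (4*\<tau>) \<le> c + inner g w + (norm (w - v))^2 / (2*\<tau>)"
    proof -
      define r where "r = norm (w - v)"
      have "inner g w = inner g v + inner g (w - v)" by (simp add: inner_diff_right)
      moreover have "inner g (w - v) \<ge> - (norm g * r)"
        using norm_cauchy_schwarz[of "-g" "w - v"] by (simp add: r_def)
      moreover have "norm g * r \<le> \<tau> * (norm g)^2 + r^2/(4*\<tau>)"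
      proof -
        have "0 \<le> (2*\<tau>*norm g - r)^2" by simp
        then have "4*\<tau>*(norm g * r) \<le> 4*\<tau>*(\<tau> * (norm g)^2 + r^2/(4*\<tau>))"
          using tau by (simp add: power2_eq_square algebra_simps)
        then show ?thesis using tau by simp
      qed
      moreover have "r^2/(4*\<tau>) \<le> r^2/(2*\<tau>)" using tau by (simp add: frac_le)
      ultimately show ?thesis unfolding L_def r_def by linarith
    qed
    ultimately show ?thesis using order_trans ereal_less_eq(3) by blast
  qed
  obtain w0 where w0: "f w0 < \<infinity>" using prp unfolding proper_fun_def by auto
  have nm: "f w \<noteq> -\<infinity>" for w using prp unfolding proper_fun_def by auto
  define m where "m = Inf (range \<phi>)"
  have m_le: "m \<le> \<phi> w" for w unfolding m_def by (rule Inf_lower) simp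
  have m_ge: "ereal L \<le> m"
    unfolding m_def
  proof (rule Inf_greatest)
    fix x assume "x \<in> range \<phi>"
    then obtain w where "x = \<phi> w" by auto
    have "ereal L \<le> ereal (L + (norm (w - v))^2 / (4*\<tau>))" using tau by simp
    then show "ereal L \<le> x" using lb[of w] \<open>x = \<phi> w\<close> by (meson order_trans)
  qed
  have "\<phi> w0 < \<infinity>" using w0 unfolding \<phi>_def by simp
  then have "m < \<infinity>" using m_le[of w0] by (meson order_le_less_trans)
  then obtain mr where mr: "m = ereal mr" using m_ge by (cases m) auto
  have "\<forall>k. \<exists>w. \<phi> w < ereal (mr + 1/Suc k)"
  proof
    fix k
    have "m < ereal (mr + 1/Suc k)" using mr by simp
    then show "\<exists>w. \<phi> w < ereal (mr + 1/Suc k)" unfolding m_def by (simp add: Inf_less_iff)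
  qed
  then obtain ws where ws: "\<And>k. \<phi> (ws k) < ereal (mr + 1/Suc k)" by metis
  have bnd: "norm (ws k) \<le> norm v + sqrt (4*\<tau>*(mr + 1 - L))" for k
  proof -
    have "ereal (L + (norm (ws k - v))^2 / (4*\<tau>)) < ereal (mr + 1/Suc k)"
      using lb[of "ws k"] ws[of k] by (meson order_le_less_trans)
    then have A: "L + (norm (ws k - v))^2 / (4*\<tau>) < mr + 1/Suc k" by (simp only: less_ereal.simps)
    have "1/Suc k \<le> (1::real)" by simp
    then have "L + (norm (ws k - v))^2 / (4*\<tau>) < mr + 1" using A by linarith
    then have "(norm (ws k - v))^2 \<le> 4*\<tau>*(mr + 1 - L)" using tau by (simp add: field_simps)
    then have "norm (ws k - v) \<le> sqrt (4*\<tau>*(mr + 1 - L))" by (simp add: real_le_rsqrt)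
    then show ?thesis using norm_triangle_ineq2[of "ws k" v] by linarith
  qed
  have "bounded (range ws)" unfolding bounded_iff using bnd by blast
  then obtain l r where r: "strict_mono r" and lim: "(ws \<circ> r) \<longlonglongrightarrow> l"
    using bounded_imp_convergent_subsequence by blast
  have epi: "(ws (r k), mr + 1/Suc (r k) - (norm (ws (r k) - v))^2 / (2*\<tau>)) \<in> {(u, s::real). f u \<le> ereal s}" for k
    using ereal_add_lt_le[of "f (ws (r k))"] ws[of "r k"] unfolding \<phi>_def by auto
  have "(\<lambda>k. 1 / real (Suc (r k))) \<longlonglongrightarrow> 0"
    using LIMSEQ_subseq_LIMSEQ[OF LIMSEQ_inverse_real_of_nat r] by (simp add: o_def inverse_eq_divide)
  then have "(\<lambda>k. (ws (r k), mr + 1/Suc (r k) - (norm (ws (r k) - v))^2 / (2*\<tau>)))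
      \<longlonglongrightarrow> (l, mr + 0 - (norm (l - v))^2 / (2*\<tau>))"
    using lim unfolding o_def
    using tau by (intro tendsto_intros) auto
  then have "(l, mr + 0 - (norm (l - v))^2 / (2*\<tau>)) \<in> {(u, s::real). f u \<le> ereal s}"
    by (rule closed_sequentially[OF cl[unfolded closed_fun_def] epi])
  then have "f l \<le> ereal (mr - (norm (l - v))^2 / (2*\<tau>))" by simp
  then have "f l + ereal ((norm (l - v))^2 / (2*\<tau>)) \<le> ereal (mr - (norm (l - v))^2 / (2*\<tau>)) + ereal ((norm (l - v))^2 / (2*\<tau>))"
    by (rule add_right_mono)
  then have "\<phi> l \<le> m" unfolding \<phi>_def mr by simp
  then have ex: "\<forall>w. \<phi> l \<le> \<phi> w" using m_le by (meson order_trans)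
  have uniq: "u1 = u2" if h1: "\<forall>w. \<phi> u1 \<le> \<phi> w" and h2: "\<forall>w. \<phi> u2 \<le> \<phi> w" for u1 u2
  proof -
    have fin: "\<exists>F. f u = ereal F" if h: "\<forall>w. \<phi> u \<le> \<phi> w" for u
    proof -
      have "\<phi> u < \<infinity>" using h[rule_format, of w0] \<open>\<phi> w0 < \<infinity>\<close> by (meson order_le_less_trans)
      then have "f u < \<infinity>" unfolding \<phi>_def by auto
      then show ?thesis using nm[of u] by (cases "f u") auto
    qed
    obtain F1 where F1: "f u1 = ereal F1" using fin[OF h1] by blast
    obtain F2 where F2: "f u2 = ereal F2" using fin[OF h2] by blast
    define q where "q w = (norm (w - v))^2 / (2*\<tau>)" for w
    have e12: "F1 + q u1 = F2 + q u2"
      using h1[rule_format, of u2] h2[rule_format, of u1] unfolding \<phi>_def q_def F1 F2 by simp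
    define mid where "mid = (1/2) *\<^sub>R u1 + (1 - 1/2) *\<^sub>R u2"
    have "f mid \<le> ereal (1/2) * f u1 + ereal (1 - 1/2) * f u2"
      using cv[unfolded convex_fun_def, rule_format, of "1/2" u1 u2] unfolding mid_def by simp
    then have fmid: "f mid \<le> ereal ((F1 + F2)/2)" using F1 F2 by (simp add: add_divide_distrib)
    have "mid - v = (1/2) *\<^sub>R (u1 - v) + (1/2) *\<^sub>R (u2 - v)" unfolding mid_def
      by (simp add: algebra_simps flip: scaleR_add_left)
    then have qm: "q mid = ((norm (u1 - v))^2 + (norm (u2 - v))^2)/2 / (2*\<tau>) - (norm (u1 - u2))^2/4/(2*\<tau>)"
      unfolding q_def using parallelogram_half[of "u1 - v" "u2 - v"] by (simp add: diff_divide_distrib)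
    have "\<phi> u1 \<le> \<phi> mid" using h1 by blast
    also have "\<phi> mid \<le> ereal ((F1 + F2)/2 + q mid)" unfolding \<phi>_def q_def using add_right_mono[OF fmid, of "ereal (q mid)"] by (simp add: q_def)
    finally have "F1 + q u1 \<le> (F1 + F2)/2 + q mid" unfolding \<phi>_def q_def F1 by simp
    moreover have "q mid = (q u1 + q u2)/2 - (norm (u1 - u2))^2/4/(2*\<tau>)"
      using qm unfolding q_def by (simp add: add_divide_distrib)
    ultimately have "(norm (u1 - u2))^2/4/(2*\<tau>) \<le> 0" using e12
      by (rule lin3)
    then have "(norm (u1 - u2))^2 \<le> 0" using tau by (simp add: divide_le_0_iff)
    then show "u1 = u2" by simp
  qed
  show ?thesis using ex uniq unfolding \<phi>_def by blast
qed

lemma lim_a: assumes "\<And>a. 0<a \<Longrightarrow> a \<le> 1 \<Longrightarrow> -(a*Z) \<le> X" "Z \<ge> 0" shows "0 \<le> (X::real)"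
proof (rule ccontr)
  assume "\<not> 0 \<le> X"
  define a where "a = min 1 (-X/(Z+1))"
  have "0 < -X/(Z+1)" using \<open>\<not> 0 \<le> X\<close> assms(2) by (intro divide_pos_pos) auto
  then have a0: "0 < a" "a \<le> 1" by (auto simp: a_def)
  have "a * Z \<le> (-X/(Z+1)) * Z" using assms(2) by (intro mult_right_mono) (auto simp: a_def)
  also have "\<dots> < -X" using \<open>\<not> 0 \<le> X\<close> assms(2) by (simp add: field_simps)
  finally show False using assms(1)[OF a0] by linarith
qed

lemma alg_a:
  fixes a \<tau> Fu Fw N I W :: real
  assumes "0<a" "0<\<tau>" "Fu + N/(2*\<tau>) \<le> a*Fw + (1-a)*Fu + (N + 2*a*I + a^2*W)/(2*\<tau>)"
  shows "-(a*(W/(2*\<tau>))) \<le> Fw - Fu + I/\<tau>"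
proof -
  have e: "(N + 2*a*I + a^2*W)/(2*\<tau>) = N/(2*\<tau>) + a*(I/\<tau> + a*(W/(2*\<tau>)))"
    using assms(2) by (simp add: field_simps power2_eq_square)
  have "a*Fu \<le> a*(Fw + (I/\<tau> + a*(W/(2*\<tau>))))"
    using assms(3) unfolding e by (simp add: algebra_simps)
  then have "Fu \<le> Fw + (I/\<tau> + a*(W/(2*\<tau>)))" using assms(1) by simp
  then show ?thesis by linarith
qed

lemma prox_vi:
  fixes f :: "'a::euclidean_space \<Rightarrow> ereal"
  assumes prp: "proper_fun f" and cl: "closed_fun f" and cv: "convex_fun f" and tau: "\<tau> > 0"
    and minor: "\<And>w. f w \<ge> ereal (c + inner g w)"
  shows "f (prox \<tau> f v) < \<infinity> \<and>
     (\<forall>w. f (prox \<tau> f v) + ereal (inner ((1/\<tau>) *\<^sub>R (v - prox \<tau> f v)) (w - prox \<tau> f v)) \<le> f w)"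
proof -
  define u where "u = prox \<tau> f v"
  have P: "\<forall>w. f u + ereal ((norm (u - v))^2 / (2*\<tau>)) \<le> f w + ereal ((norm (w - v))^2 / (2*\<tau>))"
    unfolding u_def prox_def by (rule theI'[OF prox_exists_unique[OF assms]])
  obtain w0 where w0: "f w0 < \<infinity>" using prp unfolding proper_fun_def by auto
  have "f u + ereal ((norm (u - v))^2 / (2*\<tau>)) < \<infinity>"
  proof -
    have "f w0 + ereal ((norm (w0 - v))^2 / (2*\<tau>)) < \<infinity>" using w0 by simp
    then show ?thesis by (rule order_le_less_trans[OF P[rule_format]])
  qed
  then have "f u < \<infinity>" by auto
  moreover have "f u \<noteq> -\<infinity>" using prp unfolding proper_fun_def by auto
  ultimately obtain Fu where Fu: "f u = ereal Fu" by (cases "f u") auto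
  have "f u + ereal (inner ((1/\<tau>) *\<^sub>R (v - u)) (w - u)) \<le> f w" for w
  proof (cases "f w")
    case (real Fw)
    have step: "-(a*((norm (w - u))^2/(2*\<tau>))) \<le> Fw - Fu + inner (u - v) (w - u)/\<tau>" if a: "0<a" "a\<le>1" for a
    proof -
      define xa where "xa = a *\<^sub>R w + (1-a) *\<^sub>R u"
      have "f xa \<le> ereal a * f w + ereal (1-a) * f u"
        using cv[unfolded convex_fun_def, rule_format, of a w u] a unfolding xa_def by simp
      then have fx: "f xa \<le> ereal (a*Fw + (1-a)*Fu)" using real Fu by simp
      have xv: "xa - v = (u - v) + a *\<^sub>R (w - u)" unfolding xa_def by (simp add: algebra_simps)
      have nx: "(norm (xa - v))^2 = (norm (u - v))^2 + 2*a*inner (u - v) (w - u) + a^2*(norm (w - u))^2"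
        unfolding xv by (rule norm_sq_shift)
      have "ereal (Fu + (norm (u - v))^2 / (2*\<tau>)) \<le> f xa + ereal ((norm (xa - v))^2 / (2*\<tau>))"
        using P[rule_format, of xa] Fu by simp
      also have "\<dots> \<le> ereal (a*Fw + (1-a)*Fu) + ereal ((norm (xa - v))^2 / (2*\<tau>))"
        by (rule add_right_mono[OF fx])
      finally have "Fu + (norm (u - v))^2 / (2*\<tau>) \<le> a*Fw + (1-a)*Fu + (norm (xa - v))^2 / (2*\<tau>)" by simp
      then show ?thesis unfolding nx using alg_a[OF a(1) tau] by blast
    qed
    have "0 \<le> Fw - Fu + inner (u - v) (w - u)/\<tau>"
      by (rule lim_a[OF step]) (use tau in auto)
    moreover have "inner ((1/\<tau>) *\<^sub>R (v - u)) (w - u) = - (inner (u - v) (w - u)/\<tau>)"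
      by (simp add: inner_diff_left minus_divide_left)
    ultimately show ?thesis using real Fu by simp
  next
    case PInf then show ?thesis by simp
  next
    case MInf then show ?thesis using prp unfolding proper_fun_def by auto
  qed
  then show ?thesis using \<open>f u < \<infinity>\<close> unfolding u_def by blast
qed

lemma fin_lin: "(L::real) - R = 2*(p - q) \<Longrightarrow> q \<le> p \<Longrightarrow> R \<le> L"
  by simp

lemma key_real:
  fixes aa a0a0 aa0 aB aC a0B a0C BB BC CC yy yy0 y0y0 \<tau> \<kappa> \<theta> :: real
  assumes k: "\<kappa> > 0" and Dl: "\<kappa>*\<tau>*((BB - BC) + \<theta>^2*(yy - yy0)) = aB + \<kappa>*(aB - a0B)"
    and P: "aa0 - aa \<ge> \<tau>*aC"
  shows "(a0a0 - 2*\<tau>*a0C + \<tau>^2*CC) + (\<tau>*\<theta>)^2*y0y0 \<ge> (aa + \<tau>^2*(BB + \<theta>^2*yy) - (2*\<tau>/\<kappa>)*aB)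
     + (((aa - 2*aa0 + a0a0) - 2*\<tau>*(aB - aC - a0B + a0C) + \<tau>^2*(BB - 2*BC + CC)) + (\<tau>*\<theta>)^2*(yy - 2*yy0 + y0y0))"
proof -
  define X where "X = \<tau>*(BB - BC) + \<tau>*\<theta>^2*(yy - yy0)"
  have "aB = \<kappa>*(X - (aB - a0B))" using Dl unfolding X_def by (simp add: algebra_simps)
  then have "aB/\<kappa> = (\<kappa>*(X - (aB - a0B)))/\<kappa>" by simp
  then have "aB/\<kappa> = X - (aB - a0B)" using k by simp
  then have h: "(2*\<tau>/\<kappa>)*aB = 2*\<tau>*(X - (aB - a0B))" by (metis times_divide_eq_left times_divide_eq_right)
  have "(a0a0 - 2*\<tau>*a0C + \<tau>^2*CC) + (\<tau>*\<theta>)^2*y0y0 - ((aa + \<tau>^2*(BB + \<theta>^2*yy) - (2*\<tau>*(X - (aB - a0B))))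
     + (((aa - 2*aa0 + a0a0) - 2*\<tau>*(aB - aC - a0B + a0C) + \<tau>^2*(BB - 2*BC + CC)) + (\<tau>*\<theta>)^2*(yy - 2*yy0 + y0y0)))
     = 2*((aa0 - aa) - \<tau>*aC)"
    unfolding X_def by (simp add: algebra_simps power2_eq_square)
  then show ?thesis unfolding h using P by (rule fin_lin)
qed

lemma nsq_diff: "(norm (x - y))^2 = (norm x)^2 - 2 * inner x y + (norm (y::'a::real_inner))^2"
  by (simp add: power2_norm_eq_inner inner_diff_left inner_diff_right inner_commute)

lemma key_vec:
  fixes D :: "complex^'n^'m" and a0 a :: "complex^'n" and y0 y :: "complex^'m" and \<tau> \<kappa> \<theta> :: real
  assumes k: "\<kappa> > 0"
    and P: "inner (a0 - a) a \<ge> \<tau> * inner y0 (D *v a)"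
    and Dl: "(\<kappa>*\<tau>) *\<^sub>R (D *v (cadj D *v (y - y0)) + \<theta>^2 *\<^sub>R (y - y0)) = D *v a + \<kappa> *\<^sub>R (D *v (a - a0))"
  shows "(norm (a0 - \<tau> *\<^sub>R (cadj D *v y0)))^2 + (\<tau>*\<theta>)^2 * (norm y0)^2 \<ge>
      ((norm a)^2 + \<tau>^2 * ((norm (cadj D *v y))^2 + \<theta>^2*(norm y)^2) - (2*\<tau>/\<kappa>) * inner (D *v a) y)
    + ((norm ((a - a0) - \<tau> *\<^sub>R (cadj D *v (y - y0))))^2 + (\<tau>*\<theta>)^2 * (norm (y - y0))^2)"
proof -
  define B where "B = cadj D *v y"
  define C where "C = cadj D *v y0"
  have BC: "cadj D *v (y - y0) = B - C" unfolding B_def C_def by (rule mv_diff)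
  have ad: "inner (D *v x) z = inner x (cadj D *v z)" for x z by (rule adjoint)
  have Dl': "\<kappa>*\<tau>*(((norm B)^2 - inner B C) + \<theta>^2*((norm y)^2 - inner y y0)) = inner a B + \<kappa> * (inner a B - inner a0 B)"
  proof -
    have "inner ((\<kappa>*\<tau>) *\<^sub>R (D *v (cadj D *v (y - y0)) + \<theta>^2 *\<^sub>R (y - y0))) y
        = inner (D *v a + \<kappa> *\<^sub>R (D *v (a - a0))) y" using Dl by simp
    then show ?thesis unfolding inner_scaleR_left inner_add_left ad BC B_def[symmetric]
      by (simp add: inner_diff_left inner_diff_right inner_commute power2_norm_eq_inner algebra_simps)
  qed
  have P': "inner a a0 - (norm a)^2 \<ge> \<tau> * inner a C"
  proof -
    have "inner y0 (D *v a) = inner a C" unfolding C_def inner_commute[of y0 "D *v a"] ad by simp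
    then show ?thesis using P by (simp add: inner_diff_left inner_commute[of a0 a] power2_norm_eq_inner)
  qed
  have e1: "(norm (a0 - \<tau> *\<^sub>R C))^2 = (norm a0)^2 - 2*\<tau>*inner a0 C + \<tau>^2*(norm C)^2"
    unfolding nsq_diff by (simp add: power_mult_distrib)
  have e2: "(norm ((a - a0) - \<tau> *\<^sub>R (B - C)))^2 = ((norm a)^2 - 2*inner a a0 + (norm a0)^2)
     - 2*\<tau>*(inner a B - inner a C - inner a0 B + inner a0 C) + \<tau>^2*((norm B)^2 - 2*inner B C + (norm C)^2)"
    unfolding power2_norm_eq_inner by (simp add: inner_diff_left inner_diff_right inner_commute algebra_simps power2_eq_square)
  have e3: "(norm (y - y0))^2 = (norm y)^2 - 2*inner y y0 + (norm y0)^2" by (rule nsq_diff)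
  have e4: "inner (D *v a) y = inner a B" unfolding ad B_def ..
  show ?thesis
    unfolding BC B_def[symmetric] C_def[symmetric] e1 e2 e3 e4
    by (rule key_real[OF k Dl' P'])
qed

lemma Enext_id:
  fixes a B' :: "'a::real_inner" and y :: "'b::real_inner"
  assumes "\<kappa> \<noteq> 0"
  shows "(norm (a - (\<kappa>*\<tau>) *\<^sub>R B'))^2 + (\<kappa>*\<tau>*\<theta>)^2*(norm y)^2
    = \<kappa>^2 * ((norm a)^2 + \<tau>^2*((norm B')^2 + \<theta>^2*(norm y)^2) - (2*\<tau>/\<kappa>) * inner a B') + (1 - \<kappa>^2)*(norm a)^2"
  unfolding nsq_diff using assms by (simp add: power2_eq_square field_simps)

lemma case_real:
  fixes E0 E1 Q \<rho> A \<kappa> C1 :: real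
  assumes h1: "E0 \<ge> Q + \<rho>" and h2: "E1 = \<kappa>^2*Q + (1-\<kappa>^2)*A" and h3: "A \<le> C1*E1"
    and "E1 \<ge> 0" "\<rho> \<ge> 0" "\<kappa> > 0" "C1 \<ge> 1" "A \<ge> 0" "E0 \<ge> 0"
    and small: "\<kappa> < 1 \<Longrightarrow> C1*(1-\<kappa>^2) \<le> 1/2"
  shows "E1 \<le> (1 + 2*C1*\<bar>\<kappa>^2-1\<bar>)*E0 - \<rho>"
proof (cases "\<kappa> \<ge> 1")
  case True
  then have k2: "\<kappa>^2 \<ge> 1" by (simp add: one_le_power)
  have "(1-\<kappa>^2)*A \<le> 0" using k2 \<open>A \<ge> 0\<close> by (simp add: mult_nonpos_nonneg)
  then have "E1 \<le> \<kappa>^2*Q" using h2 by linarith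
  also have "\<dots> \<le> \<kappa>^2*(E0 - \<rho>)" using h1 k2 by (intro mult_left_mono) auto
  also have "\<dots> \<le> \<kappa>^2*E0 - \<rho>" using k2 \<open>\<rho> \<ge> 0\<close>
  proof -
    have "1*\<rho> \<le> \<kappa>^2*\<rho>" by (rule mult_right_mono[OF k2 \<open>\<rho> \<ge> 0\<close>])
    then show ?thesis by (simp add: right_diff_distrib)
  qed
  also have "\<kappa>^2*E0 \<le> (1 + 2*C1*\<bar>\<kappa>^2-1\<bar>)*E0"
  proof -
    have "1*(\<kappa>^2-1) \<le> (2*C1)*(\<kappa>^2-1)" using k2 \<open>C1 \<ge> 1\<close> by (intro mult_right_mono) auto
    then have "\<kappa>^2 \<le> 1 + 2*C1*\<bar>\<kappa>^2-1\<bar>" using k2 by simp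
    then show ?thesis using \<open>E0 \<ge> 0\<close> by (intro mult_right_mono) auto
  qed
  finally show ?thesis by linarith
next
  case False
  then have k1: "\<kappa> < 1" by simp
  define \<delta> where "\<delta> = C1*(1-\<kappa>^2)"
  have k2: "\<kappa>^2 < 1" "\<kappa>^2 > 0" using k1 \<open>\<kappa> > 0\<close> by (auto simp: power_less_one_iff)
  have d: "0 \<le> \<delta>" "\<delta> \<le> 1/2" using small[OF k1] k2 \<open>C1 \<ge> 1\<close> by (auto simp: \<delta>_def)
  have "(1-\<kappa>^2)*A \<le> (1-\<kappa>^2)*(C1*E1)" using h3 k2 by (intro mult_left_mono) auto
  then have "(1-\<kappa>^2)*A \<le> \<delta>*E1" unfolding \<delta>_def by (simp add: algebra_simps)
  then have "E1 \<le> \<kappa>^2*Q + \<delta>*E1" using h2 by linarith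
  moreover have "\<kappa>^2*Q \<le> \<kappa>^2*(E0 - \<rho>)" using h1 k2 by (intro mult_left_mono) auto
  ultimately have a: "(1-\<delta>)*E1 \<le> \<kappa>^2*(E0 - \<rho>)" by (simp add: algebra_simps)
  have "0 \<le> (1-\<delta>)*E1" using d \<open>E1 \<ge> 0\<close> by simp
  then have "0 \<le> \<kappa>^2*(E0 - \<rho>)" using a by linarith
  then have "0 \<le> E0 - \<rho>" using k2 by (simp add: zero_le_mult_iff)
  then have "\<kappa>^2*(E0 - \<rho>) \<le> 1*(E0 - \<rho>)" using k2 by (intro mult_right_mono) auto
  then have "\<kappa>^2*(E0 - \<rho>) \<le> E0 - \<rho>" by simp
  with a have b: "(1-\<delta>)*E1 \<le> E0 - \<rho>" by linarith
  have "E1 \<le> (1+2*\<delta>)*((1-\<delta>)*E1)"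
  proof -
    have "\<delta>*(1-2*\<delta>) \<ge> 0" using d by (intro mult_nonneg_nonneg) auto
    then have "(1+2*\<delta>)*(1-\<delta>) \<ge> 1" by (simp add: algebra_simps)
    then have "1*E1 \<le> ((1+2*\<delta>)*(1-\<delta>))*E1" using \<open>E1 \<ge> 0\<close> by (intro mult_right_mono) auto
    then show ?thesis by (simp add: mult.assoc)
  qed
  also have "\<dots> \<le> (1+2*\<delta>)*(E0 - \<rho>)" using b d by (intro mult_left_mono) auto
  also have "\<dots> \<le> (1+2*\<delta>)*E0 - \<rho>" using d \<open>\<rho> \<ge> 0\<close> by (simp add: algebra_simps)
  also have "\<delta> = C1*\<bar>\<kappa>^2-1\<bar>" using k2 by (simp add: \<delta>_def)
  finally show ?thesis by (simp add: algebra_simps)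
qed

lemma qf_exp:
  fixes a \<epsilon> \<rho> :: "nat \<Rightarrow> real"
  assumes step: "\<And>t. t \<ge> T \<Longrightarrow> a (Suc t) \<le> (1 + \<epsilon> t)*a t - \<rho> t"
    and "\<And>t. \<rho> t \<ge> 0" "\<And>t. \<epsilon> t \<ge> 0" "\<And>t. a t \<ge> 0" and s: "T \<le> s"
  shows "a (s + k) \<le> exp (\<Sum>r\<in>{s..<s+k}. \<epsilon> r) * a s"
proof (induction k)
  case 0 then show ?case by simp
next
  case (Suc k)
  have "a (s + Suc k) \<le> (1 + \<epsilon> (s+k))*a (s+k)" using step[of "s+k"] s assms(2)[of "s+k"] by simp
  also have "\<dots> \<le> exp (\<epsilon> (s+k)) * a (s+k)"
    using assms(4)[of "s+k"] by (intro mult_right_mono) (auto simp: add.commute exp_ge_add_one_self)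
  also have "\<dots> \<le> exp (\<epsilon> (s+k)) * (exp (\<Sum>r\<in>{s..<s+k}. \<epsilon> r) * a s)"
    using Suc.IH by (intro mult_left_mono) auto
  also have "\<dots> = exp (\<Sum>r\<in>{s..<s+Suc k}. \<epsilon> r) * a s"
    by (simp add: exp_add add.commute)
  finally show ?case .
qed

lemma qf_bound:
  fixes a \<epsilon> \<rho> :: "nat \<Rightarrow> real"
  assumes step: "\<And>t. t \<ge> T \<Longrightarrow> a (Suc t) \<le> (1 + \<epsilon> t)*a t - \<rho> t"
    and "\<And>t. \<rho> t \<ge> 0" "\<And>t. \<epsilon> t \<ge> 0" "\<And>t. a t \<ge> 0" and sm: "summable \<epsilon>"
    and "T \<le> s" "s \<le> t"
  shows "a t \<le> exp (suminf \<epsilon>) * a s"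
proof -
  obtain k where t: "t = s + k" using \<open>s \<le> t\<close> le_Suc_ex by blast
  have "a t \<le> exp (\<Sum>r\<in>{s..<s+k}. \<epsilon> r) * a s" unfolding t by (rule qf_exp) (use assms in auto)
  also have "\<dots> \<le> exp (suminf \<epsilon>) * a s"
    using sum_le_suminf[OF sm, of "{s..<s+k}"] assms(3,4) by (intro mult_right_mono) auto
  finally show ?thesis .
qed

lemma qf_rho:
  fixes a \<epsilon> \<rho> :: "nat \<Rightarrow> real"
  assumes step: "\<And>t. t \<ge> T \<Longrightarrow> a (Suc t) \<le> (1 + \<epsilon> t)*a t - \<rho> t"
    and r0: "\<And>t. \<rho> t \<ge> 0" and e0: "\<And>t. \<epsilon> t \<ge> 0" and a0: "\<And>t. a t \<ge> 0" and sm: "summable \<epsilon>"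
    and B: "\<And>t. t \<ge> T \<Longrightarrow> a t \<le> B"
  shows "\<rho> \<longlonglongrightarrow> 0"
proof -
  have smT: "summable (\<lambda>k. \<epsilon> (k + T))" using sm by (simp add: summable_iff_shift)
  have B0: "B \<ge> 0" using B[of T] a0[of T] by simp
  have ps: "(\<Sum>k<N. \<rho> (k + T)) \<le> a T - a (N + T) + B * (\<Sum>k<N. \<epsilon> (k + T))" for N
  proof (induction N)
    case 0 then show ?case by simp
  next
    case (Suc N)
    have "\<rho> (N + T) \<le> a (N + T) - a (Suc (N + T)) + \<epsilon> (N + T) * a (N + T)"
      using step[of "N + T"] by (simp add: algebra_simps)
    also have "\<epsilon> (N + T) * a (N + T) \<le> \<epsilon> (N + T) * B" using B[of "N+T"] e0 by (intro mult_left_mono) auto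
    finally show ?case using Suc.IH by (simp add: algebra_simps)
  qed
  have "(\<Sum>k<N. \<rho> (k + T)) \<le> a T + B * suminf (\<lambda>k. \<epsilon> (k + T))" for N
  proof -
    have "(\<Sum>k<N. \<epsilon> (k + T)) \<le> suminf (\<lambda>k. \<epsilon> (k + T))" using sum_le_suminf[OF smT] e0 by auto
    then have "B * (\<Sum>k<N. \<epsilon> (k + T)) \<le> B * suminf (\<lambda>k. \<epsilon> (k + T))" using B0 by (rule mult_left_mono)
    then show ?thesis using ps[of N] a0[of "N+T"] by linarith
  qed
  then have "summable (\<lambda>k. \<rho> (k + T))" using r0 by (intro summableI_nonneg_bounded) auto
  then have "(\<lambda>k. \<rho> (k + T)) \<longlonglongrightarrow> 0" by (rule summable_LIMSEQ_zero)
  then show ?thesis by (rule LIMSEQ_offset)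
qed

lemma coerc:
  fixes x z :: "'a::real_normed_vector" and y :: "'b::real_normed_vector"
  assumes h: "(norm (x - s *\<^sub>R z))^2 + (s*\<theta>)^2*(norm y)^2 \<le> B" and nz: "norm z \<le> norm y * nA"
    and "\<tau>l \<le> s" "s \<le> \<tau>u" "0 < \<tau>l" "0 < \<theta>" "0 \<le> nA"
  shows "norm y \<le> sqrt B/(\<tau>l*\<theta>)" "norm x \<le> sqrt B + \<tau>u*nA*(sqrt B/(\<tau>l*\<theta>))"
proof -
  have s0: "s > 0" using assms by linarith
  have "(s*\<theta>*norm y)^2 = (s*\<theta>)^2*(norm y)^2" by (simp add: power_mult_distrib)
  then have "(s*\<theta>*norm y)^2 \<le> B" using h zero_le_power2[of "norm (x - s *\<^sub>R z)"] by linarith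
  then have sy: "s*\<theta>*norm y \<le> sqrt B" by (simp add: real_le_rsqrt)
  have "\<tau>l*\<theta>*norm y \<le> s*\<theta>*norm y" using assms by (intro mult_right_mono) auto
  then have "\<tau>l*\<theta>*norm y \<le> sqrt B" using sy by linarith
  then show ny: "norm y \<le> sqrt B/(\<tau>l*\<theta>)" using assms by (simp add: field_simps mult.commute)
  have "(s*\<theta>)^2*(norm y)^2 \<ge> 0" by simp
  then have "(norm (x - s *\<^sub>R z))^2 \<le> B" using h by linarith
  then have nx: "norm (x - s *\<^sub>R z) \<le> sqrt B" by (simp add: real_le_rsqrt)
  have "norm x \<le> norm (x - s *\<^sub>R z) + norm (s *\<^sub>R z)" using norm_triangle_ineq[of "x - s *\<^sub>R z" "s *\<^sub>R z"] by simp
  also have "norm (s *\<^sub>R z) \<le> \<tau>u * (nA * (sqrt B/(\<tau>l*\<theta>)))"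
  proof -
    have "norm (s *\<^sub>R z) = s * norm z" using s0 by simp
    also have "\<dots> \<le> \<tau>u * (nA * (sqrt B/(\<tau>l*\<theta>)))"
    proof (rule mult_mono)
      have "norm y * nA \<le> (sqrt B / (\<tau>l * \<theta>)) * nA" using ny assms by (intro mult_right_mono) auto
      then show "norm z \<le> nA * (sqrt B / (\<tau>l * \<theta>))" using nz by (simp add: mult.commute)
    qed (use assms s0 in auto)
    finally show ?thesis .
  qed
  finally show "norm x \<le> sqrt B + \<tau>u*nA*(sqrt B/(\<tau>l*\<theta>))" using nx by (simp add: mult.assoc)
qed

lemma subdiff_mono:
  assumes "g1 \<in> subdiff f x1" "g2 \<in> subdiff f x2" "\<And>x. f x \<noteq> -\<infinity>"
  shows "inner (g1 - g2) (x1 - x2) \<ge> 0"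
proof -
  obtain F1 where F1: "f x1 = ereal F1" using assms(1) assms(3)[of x1] unfolding subdiff_def by (cases "f x1") auto
  obtain F2 where F2: "f x2 = ereal F2" using assms(2) assms(3)[of x2] unfolding subdiff_def by (cases "f x2") auto
  have "f x1 + ereal (inner g1 (x2 - x1)) \<le> f x2" using assms(1) unfolding subdiff_def by blast
  then have "F2 \<ge> F1 + inner g1 (x2 - x1)" using F1 F2 by simp
  moreover have "f x2 + ereal (inner g2 (x1 - x2)) \<le> f x1" using assms(2) unfolding subdiff_def by blast
  then have "F1 \<ge> F2 + inner g2 (x1 - x2)" using F1 F2 by simp
  ultimately show ?thesis by (simp add: inner_diff_left inner_diff_right algebra_simps)
qed

lemma proj_ratio_bounds:
  assumes "0 < a" "a < c"
  shows "a \<le> proj_ratio a c n d" "proj_ratio a c n d \<le> c"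
  using assms unfolding proj_ratio_def by auto

lemma exp_neg_le_inv: "0 \<le> (x::real) \<Longrightarrow> exp (-x) \<le> 1/(1+x)"
proof -
  assume x: "0 \<le> x"
  have "1 + x \<le> exp x" by (rule exp_ge_add_one_self)
  then have "1/exp x \<le> 1/(1+x)" using x by (intro divide_left_mono) auto
  then show ?thesis by (simp add: exp_minus inverse_eq_divide)
qed

lemma kappa_bounds:
  fixes \<omega> \<eta> \<eta>l \<eta>u :: real
  assumes w: "0 < \<omega>" "\<omega> \<le> 1" and e: "\<eta>l \<le> \<eta>" "\<eta> \<le> \<eta>u" "0 < \<eta>l" "\<eta>l < \<eta>u"
  defines "mk \<equiv> min 1 \<eta>l" and "Mk \<equiv> max 1 \<eta>u"
  shows "mk \<le> 1 - \<omega> + \<omega>*\<eta>" "1 - \<omega> + \<omega>*\<eta> \<le> Mk"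
    "\<bar>(1 - \<omega> + \<omega>*\<eta>)^2 - 1\<bar> \<le> \<omega> * (Mk * (Mk + 1))"
    "1 - \<omega> + \<omega>*\<eta> \<le> exp (Mk * \<omega>)"
    "exp (- ((1 - mk)/mk * \<omega>)) \<le> 1 - \<omega> + \<omega>*\<eta>"
proof -
  define \<kappa> where "\<kappa> = 1 - \<omega> + \<omega>*\<eta>"
  have mk: "0 < mk" "mk \<le> 1" "mk \<le> \<eta>" using e by (auto simp: mk_def)
  have Mk: "1 \<le> Mk" "\<eta> \<le> Mk" using e by (auto simp: Mk_def)
  have kl: "1 - \<omega>*(1 - mk) \<le> \<kappa>" unfolding \<kappa>_def using mk w
    by (simp add: algebra_simps mult_left_mono)
  have ku: "\<kappa> \<le> 1 + \<omega>*(Mk - 1)" unfolding \<kappa>_def using Mk w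
    by (simp add: algebra_simps mult_left_mono)
  have "\<omega>*(1 - mk) \<le> 1 - mk" using w mk by (intro mult_left_le_one_le) auto
  then show k1: "mk \<le> 1 - \<omega> + \<omega>*\<eta>" using kl unfolding \<kappa>_def by linarith
  have "\<omega>*(Mk - 1) \<le> Mk - 1" using w Mk by (intro mult_left_le_one_le) auto
  then show k2: "1 - \<omega> + \<omega>*\<eta> \<le> Mk" using ku unfolding \<kappa>_def by linarith
  have "\<bar>\<kappa> - 1\<bar> \<le> \<omega> * Mk"
  proof -
    have "\<kappa> - 1 \<le> \<omega>*Mk" using ku w by (smt (verit, best) mult_left_mono)
    moreover have "1 - \<kappa> \<le> \<omega>*Mk"
    proof -
      have "\<omega>*(1 - mk) \<le> \<omega>*Mk" using w mk Mk by (intro mult_left_mono) auto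
      then show ?thesis using kl by linarith
    qed
    ultimately show ?thesis by linarith
  qed
  moreover have "\<bar>\<kappa> + 1\<bar> \<le> Mk + 1" using k1 k2 mk unfolding \<kappa>_def by auto
  ultimately have "\<bar>\<kappa> - 1\<bar> * \<bar>\<kappa> + 1\<bar> \<le> (\<omega>*Mk)*(Mk + 1)"
    by (intro mult_mono) auto
  moreover have "\<bar>\<kappa>^2 - 1\<bar> = \<bar>\<kappa> - 1\<bar> * \<bar>\<kappa> + 1\<bar>"
    by (simp add: power2_eq_square abs_mult[symmetric] algebra_simps)
  ultimately show "\<bar>(1 - \<omega> + \<omega>*\<eta>)^2 - 1\<bar> \<le> \<omega> * (Mk * (Mk + 1))"
    unfolding \<kappa>_def by (simp add: mult.assoc)
  have "1 + \<omega>*(Mk - 1) \<le> 1 + Mk*\<omega>" using w by (simp add: algebra_simps)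
  also have "\<dots> \<le> exp (Mk*\<omega>)" by (rule exp_ge_add_one_self)
  finally show "1 - \<omega> + \<omega>*\<eta> \<le> exp (Mk * \<omega>)" using ku unfolding \<kappa>_def by linarith
  define d where "d = 1 - mk"
  define cc where "cc = d/mk"
  have d: "0 \<le> d" "d < 1" using mk by (auto simp: d_def)
  have cc0: "0 \<le> cc" using d mk by (simp add: cc_def)
  have "exp (- (cc*\<omega>)) \<le> 1/(1 + cc*\<omega>)" using cc0 w by (intro exp_neg_le_inv) auto
  also have "\<dots> \<le> 1 - \<omega>*d"
  proof -
    have eq: "(1 - \<omega>*d)*(1 + cc*\<omega>) = 1 + \<omega>*d^2*(1-\<omega>)/mk"
      using mk unfolding cc_def d_def by (simp add: field_simps power2_eq_square)
    have "\<omega>*d^2*(1-\<omega>)/mk \<ge> 0" using w mk by (intro divide_nonneg_pos mult_nonneg_nonneg) auto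
    then have "1 \<le> (1 - \<omega>*d)*(1 + cc*\<omega>)" using eq by linarith
    moreover have "0 < 1 + cc*\<omega>" using cc0 w by (smt (verit) mult_nonneg_nonneg)
    ultimately show ?thesis by (simp add: divide_le_eq)
  qed
  finally show "exp (- ((1 - mk)/mk * \<omega>)) \<le> 1 - \<omega> + \<omega>*\<eta>"
    using kl unfolding cc_def d_def \<kappa>_def by (simp add: mult.commute)
qed

lemma tau_bounds:
  fixes tau \<kappa> \<omega> :: "nat \<Rightarrow> real"
  assumes t0: "tau 0 > 0" and ts: "\<And>t. tau (Suc t) = \<kappa> t * tau t"
    and kl: "\<And>t. exp (- (c * \<omega> t)) \<le> \<kappa> t" and ku: "\<And>t. \<kappa> t \<le> exp (C * \<omega> t)"
    and w0: "\<And>t. 0 \<le> \<omega> t" and sm: "summable \<omega>" and c: "0 \<le> c" "0 \<le> C"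
  shows "tau 0 * exp (- (c * suminf \<omega>)) \<le> tau t" "tau t \<le> tau 0 * exp (C * suminf \<omega>)"
proof -
  have I: "tau 0 * exp (- (c * (\<Sum>s<t. \<omega> s))) \<le> tau t \<and> tau t \<le> tau 0 * exp (C * (\<Sum>s<t. \<omega> s))" for t
  proof (induction t)
    case 0 then show ?case by simp
  next
    case (Suc t)
    have k0: "0 < \<kappa> t" using kl[of t] by (smt (verit) exp_gt_zero)
    have "tau 0 * exp (- (c * (\<Sum>s<Suc t. \<omega> s))) = exp (- (c * \<omega> t)) * (tau 0 * exp (- (c * (\<Sum>s<t. \<omega> s))))"
      by (simp add: algebra_simps exp_add[symmetric] exp_diff)
    also have "\<dots> \<le> \<kappa> t * tau t"
      using Suc.IH kl[of t] t0 k0 by (intro mult_mono) auto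
    finally have A: "tau 0 * exp (- (c * (\<Sum>s<Suc t. \<omega> s))) \<le> tau (Suc t)" using ts by simp
    have "\<kappa> t * tau t \<le> exp (C * \<omega> t) * (tau 0 * exp (C * (\<Sum>s<t. \<omega> s)))"
    proof (rule mult_mono)
      show "0 \<le> tau t" using Suc.IH t0 by (smt (verit) exp_gt_zero mult_pos_pos)
    qed (use Suc.IH ku[of t] k0 in auto)
    also have "\<dots> = tau 0 * exp (C * (\<Sum>s<Suc t. \<omega> s))"
      by (simp add: algebra_simps exp_add[symmetric])
    finally show ?case using A ts by simp
  qed
  have S: "(\<Sum>s<t. \<omega> s) \<le> suminf \<omega>" using sum_le_suminf[OF sm] w0 by auto
  have "tau 0 * exp (- (c * suminf \<omega>)) \<le> tau 0 * exp (- (c * (\<Sum>s<t. \<omega> s)))"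
    using S c t0 by (intro mult_left_mono) (auto intro!: mult_left_mono)
  then show "tau 0 * exp (- (c * suminf \<omega>)) \<le> tau t" using I[of t] by linarith
  have "tau 0 * exp (C * (\<Sum>s<t. \<omega> s)) \<le> tau 0 * exp (C * suminf \<omega>)"
    using S c t0 by (intro mult_left_mono) (auto intro!: mult_left_mono)
  then show "tau t \<le> tau 0 * exp (C * suminf \<omega>)" using I[of t] by linarith
qed

lemma norm_sq_bound:
  fixes a z :: "'a::real_normed_vector" and y :: "'b::real_normed_vector"
  assumes nz: "norm z \<le> norm y * nA" and s: "0 \<le> s" and th: "0 < \<theta>" and nA: "0 \<le> nA"
  shows "(norm a)^2 \<le> (2 + 2*nA^2/\<theta>^2) * ((norm (a - s *\<^sub>R z))^2 + (s*\<theta>)^2*(norm y)^2)"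
proof -
  define X where "X = norm (a - s *\<^sub>R z)"
  define Y where "Y = s * nA * norm y"
  have "norm a \<le> X + norm (s *\<^sub>R z)" unfolding X_def using norm_triangle_ineq[of "a - s *\<^sub>R z" "s *\<^sub>R z"] by simp
  also have "norm (s *\<^sub>R z) \<le> Y" unfolding Y_def using mult_left_mono[OF nz s] s by (simp add: mult.commute mult.left_commute)
  finally have n: "norm a \<le> X + Y" by simp
  have X0: "0 \<le> X" unfolding X_def by simp
  have "(norm a)^2 \<le> (X + Y)^2" using n by (simp add: power_mono)
  also have "\<dots> \<le> 2*X^2 + 2*Y^2"
  proof -
    have "2*X^2 + 2*Y^2 - (X+Y)^2 = (X - Y)^2" by (simp add: power2_eq_square algebra_simps)
    moreover have "0 \<le> (X - Y)^2" by simp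
    ultimately show ?thesis by linarith
  qed
  also have "2*Y^2 = (2*nA^2/\<theta>^2) * ((s*\<theta>)^2*(norm y)^2)" unfolding Y_def using th
    by (simp add: power_mult_distrib field_simps)
  also have "2*X^2 + (2*nA^2/\<theta>^2) * ((s*\<theta>)^2*(norm y)^2) \<le> (2 + 2*nA^2/\<theta>^2) * (X^2 + (s*\<theta>)^2*(norm y)^2)"
  proof -
    have "0 \<le> 2*((s*\<theta>)^2*(norm y)^2)" by simp
    moreover have "0 \<le> (2*nA^2/\<theta>^2) * X^2" by simp
    ultimately show ?thesis by (simp add: algebra_simps)
  qed
  finally show ?thesis unfolding X_def .
qed

theorem theorem1:
  fixes f :: "complex ^ 'n \<Rightarrow> ereal"
    and D :: "complex ^ 'n ^ 'm" and b :: "complex ^ 'm"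
    and \<omega> :: "nat \<Rightarrow> real"
    and \<theta> \<eta>l \<eta>u :: real
    and u ut :: "nat \<Rightarrow> complex ^ 'n"
    and lam p :: "nat \<Rightarrow> complex ^ 'm"
    and tau \<eta> \<kappa> :: "nat \<Rightarrow> real"
  assumes f_proper: "proper_fun f" and f_closed: "closed_fun f" and f_convex: "convex_fun f"
    and KKT: "\<exists>us ls. D *v us = b \<and> - (cadj D *v ls) \<in> subdiff f us"
    and \<omega>_range: "\<And>t. 0 < \<omega> t \<and> \<omega> t \<le> 1"
    and \<omega>0: "\<omega> 0 = 1" and \<omega>_sum: "summable \<omega>"
    and tau_init: "tau 0 > 0"
    and \<theta>_pos: "\<theta> > 0" and \<eta>_bounds: "0 < \<eta>l" "\<eta>l < \<eta>u"
    \<comment> \<open>tau t stands for tau_{t-1}\<close>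
    and ut_def: "\<And>t. ut t = u t - tau t *\<^sub>R (cadj D *v lam t)"
    and u_step: "\<And>t. u (Suc t) = prox (tau t) f (ut t)"
    and \<eta>_def: "\<And>t. \<eta> t = proj_ratio \<eta>l \<eta>u (norm (u (Suc t)))
                   (sqrt (norm (u (Suc t) - ut t) ^ 2 + norm ((\<theta> * tau t) *\<^sub>R lam t) ^ 2))"
    and \<kappa>_def: "\<And>t. \<kappa> t = 1 - \<omega> t + \<omega> t * \<eta> t"
    and tau_step: "\<And>t. tau (Suc t) = \<kappa> t * tau t"
    and p_def: "\<And>t. p (Suc t) = D *v (u (Suc t) + \<kappa> t *\<^sub>R (u (Suc t) - u t)) - b"
    and lam_step: "\<And>t. lam (Suc t) = lam t +
          inverse (tau (Suc t)) *\<^sub>R (matrix_inv (D ** cadj D + of_real (\<theta>^2) *\<^sub>R mat 1) *v p (Suc t))"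
  shows "\<exists>ustar. D *v ustar = b \<and> (\<forall>v. D *v v = b \<longrightarrow> f ustar \<le> f v)
                 \<and> u \<longlonglongrightarrow> ustar"
proof -
  obtain us ls where us: "D *v us = b" and ls: "- (cadj D *v ls) \<in> subdiff f us" using KKT by blast
  have nm: "\<And>x. f x \<noteq> -\<infinity>" using f_proper unfolding proper_fun_def by auto
  obtain Fus where Fus: "f us = ereal Fus"
    using ls nm[of us] unfolding subdiff_def by (cases "f us") auto
  define gs where "gs = - (cadj D *v ls)"
  have minor: "f w \<ge> ereal ((Fus - inner gs us) + inner gs w)" for w
  proof -
    have "f us + ereal (inner gs (w - us)) \<le> f w" using ls unfolding subdiff_def gs_def by blast
    then have "ereal (Fus + inner gs (w - us)) \<le> f w" using Fus by simp
    moreover have "Fus + inner gs (w - us) = (Fus - inner gs us) + inner gs w" by (simp add: inner_diff_right)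
    ultimately show ?thesis by simp
  qed
  define mk where "mk = min 1 \<eta>l"
  define Mk where "Mk = max 1 \<eta>u"
  have mk0: "0 < mk" and Mk1: "1 \<le> Mk" using \<eta>_bounds by (auto simp: mk_def Mk_def)
  have eta: "\<eta>l \<le> \<eta> t" "\<eta> t \<le> \<eta>u" for t
    unfolding \<eta>_def using proj_ratio_bounds[OF \<eta>_bounds] by auto
  have w01: "0 < \<omega> t" "\<omega> t \<le> 1" for t using \<omega>_range by auto
  have w0: "0 \<le> \<omega> t" for t using w01(1)[of t] by simp
  have kb: "mk \<le> \<kappa> t" "\<kappa> t \<le> Mk" "\<bar>(\<kappa> t)^2 - 1\<bar> \<le> \<omega> t * (Mk * (Mk + 1))"
      "\<kappa> t \<le> exp (Mk * \<omega> t)" "exp (- ((1 - mk)/mk * \<omega> t)) \<le> \<kappa> t" for t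
    using kappa_bounds[OF w01(1)[of t] w01(2)[of t] eta(1)[of t] eta(2)[of t] \<eta>_bounds(1) \<eta>_bounds(2)]
    unfolding \<kappa>_def[of t] mk_def Mk_def by auto
  have k0: "0 < \<kappa> t" for t using kb(1)[of t] mk0 by linarith
  define S where "S = suminf \<omega>"
  define \<tau>l where "\<tau>l = tau 0 * exp (- ((1 - mk)/mk * S))"
  define \<tau>u where "\<tau>u = tau 0 * exp (Mk * S)"
  have cc0: "0 \<le> (1 - mk)/mk" using mk0 by (simp add: mk_def)
  have taub: "\<tau>l \<le> tau t" "tau t \<le> \<tau>u" for t
    unfolding \<tau>l_def \<tau>u_def S_def
    using tau_bounds[OF tau_init tau_step kb(5) kb(4) w0 \<omega>_sum cc0, of t] Mk1 by auto
  have \<tau>l0: "0 < \<tau>l" unfolding \<tau>l_def using tau_init by simp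
  have tpos: "0 < tau t" for t using taub(1)[of t] \<tau>l0 by linarith
  obtain nA where nA0: "nA > 0" and nA: "\<And>y. norm (cadj D *v y) \<le> norm y * nA"
    using mv_bounded[of "cadj D"] by blast
  obtain nD where nD0: "nD > 0" and nD: "\<And>x. norm (D *v x) \<le> norm x * nD"
    using mv_bounded[of D] by blast
  define C1 where "C1 = 2 + 2*nA^2/\<theta>^2"
  have C1: "1 \<le> C1" unfolding C1_def by simp
  define \<epsilon> where "\<epsilon> t = 2*C1*\<bar>(\<kappa> t)^2 - 1\<bar>" for t
  have \<epsilon>0: "0 \<le> \<epsilon> t" for t unfolding \<epsilon>_def using C1 by simp
  have \<epsilon>sum: "summable \<epsilon>"
  proof (rule summable_comparison_test[OF _ summable_mult[OF \<omega>_sum, of "2*C1*(Mk*(Mk+1))"]])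
    show "\<exists>N. \<forall>n\<ge>N. norm (\<epsilon> n) \<le> 2*C1*(Mk*(Mk+1)) * \<omega> n"
    proof (intro exI allI impI)
      fix n
      have "2*C1*\<bar>(\<kappa> n)^2 - 1\<bar> \<le> 2*C1*(\<omega> n * (Mk * (Mk + 1)))" using kb(3)[of n] C1 by (intro mult_left_mono) auto
      then show "norm (\<epsilon> n) \<le> 2*C1*(Mk*(Mk+1)) * \<omega> n" using \<epsilon>0[of n] unfolding \<epsilon>_def by (simp add: algebra_simps)
    qed
  qed
  obtain T where T: "\<And>t. T \<le> t \<Longrightarrow> C1*\<bar>(\<kappa> t)^2 - 1\<bar> \<le> 1/2"
  proof -
    have "\<omega> \<longlonglongrightarrow> 0" using \<omega>_sum by (rule summable_LIMSEQ_zero)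
    moreover have "0 < 1/(2*C1*(Mk*(Mk+1)))" using C1 Mk1 by simp
    ultimately have "eventually (\<lambda>t. \<omega> t < 1/(2*C1*(Mk*(Mk+1)))) sequentially"
      by (rule order_tendstoD)
    then obtain T where h: "\<And>t. T \<le> t \<Longrightarrow> \<omega> t < 1/(2*C1*(Mk*(Mk+1)))" unfolding eventually_sequentially by blast
    have "C1*\<bar>(\<kappa> t)^2 - 1\<bar> \<le> 1/2" if "T \<le> t" for t
    proof -
      have pos: "0 < 2*C1*(Mk*(Mk+1))" using C1 Mk1 by simp
      have "C1*\<bar>(\<kappa> t)^2 - 1\<bar> \<le> C1*(\<omega> t * (Mk * (Mk + 1)))" using kb(3)[of t] C1 by (intro mult_left_mono) auto
      also have "\<dots> = (2*C1*(Mk*(Mk+1)))*\<omega> t / 2" by (simp add: algebra_simps)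
      also have "\<dots> \<le> (2*C1*(Mk*(Mk+1)))*(1/(2*C1*(Mk*(Mk+1)))) / 2"
        using h[OF that] pos by (intro divide_right_mono mult_left_mono) auto
      also have "\<dots> = 1/2" using C1 Mk1 by simp
      finally show ?thesis .
    qed
    then show ?thesis using that by blast
  qed
  define \<rho> where "\<rho> t = (norm ((u (Suc t) - u t) - tau t *\<^sub>R (cadj D *v (lam (Suc t) - lam t))))^2
      + (tau t*\<theta>)^2*(norm (lam (Suc t) - lam t))^2" for t
  have \<rho>0: "0 \<le> \<rho> t" for t unfolding \<rho>_def by simp
  define En where "En u1 l1 t = (norm (u t - u1 - tau t *\<^sub>R (cadj D *v (lam t - l1))))^2
      + (tau t*\<theta>)^2*(norm (lam t - l1))^2" for u1 l1 t
  have En0: "0 \<le> En u1 l1 t" for u1 l1 t unfolding En_def by simp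
  define g where "g t = (1/tau t) *\<^sub>R (ut t - u (Suc t))" for t
  have gsub: "g t \<in> subdiff f (u (Suc t))" for t
  proof -
    have "f (u (Suc t)) < \<infinity> \<and> (\<forall>w. f (u (Suc t)) + ereal (inner (g t) (w - u (Suc t))) \<le> f w)"
      unfolding g_def u_step by (rule prox_vi[OF f_proper f_closed f_convex tpos minor])
    then show ?thesis unfolding subdiff_def by auto
  qed
  have dual: "tau (Suc t) *\<^sub>R (D *v (cadj D *v (lam (Suc t) - lam t)) + \<theta>^2 *\<^sub>R (lam (Suc t) - lam t)) = p (Suc t)" for t
  proof -
    have "lam (Suc t) - lam t = inverse (tau (Suc t)) *\<^sub>R (matrix_inv (D ** cadj D + of_real (\<theta>^2) *\<^sub>R mat 1) *v p (Suc t))"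
      using lam_step[of t] by simp
    then have "(D ** cadj D + of_real (\<theta>^2) *\<^sub>R mat 1) *v (lam (Suc t) - lam t) = inverse (tau (Suc t)) *\<^sub>R p (Suc t)"
      by (simp only: mv_scaleR Minv[OF \<theta>_pos])
    then have "D *v (cadj D *v (lam (Suc t) - lam t)) + \<theta>^2 *\<^sub>R (lam (Suc t) - lam t) = inverse (tau (Suc t)) *\<^sub>R p (Suc t)"
      by (simp only: Mmv)
    then show ?thesis using tpos[of "Suc t"] by simp
  qed
  have step: "En u1 l1 (Suc t) \<le> (1 + \<epsilon> t) * En u1 l1 t - \<rho> t"
    if u1: "D *v u1 = b" and l1: "- (cadj D *v l1) \<in> subdiff f u1" and tT: "T \<le> t" for u1 l1 t
  proof -
    define a0 where "a0 = u t - u1"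
    define a where "a = u (Suc t) - u1"
    define y0 where "y0 = lam t - l1"
    define y where "y = lam (Suc t) - l1"
    have ad: "inner (D *v x) z = inner x (cadj D *v z)" for x z by (rule adjoint)
    have da: "a - a0 = u (Suc t) - u t" unfolding a_def a0_def by simp
    have dy: "y - y0 = lam (Suc t) - lam t" unfolding y_def y0_def by simp
    have P: "inner (a0 - a) a \<ge> tau t * inner y0 (D *v a)"
    proof -
      have m: "inner (g t - (- (cadj D *v l1))) (u (Suc t) - u1) \<ge> 0"
        by (rule subdiff_mono[OF gsub l1 nm])
      have "g t - (- (cadj D *v l1)) = (1/tau t) *\<^sub>R (a0 - a) - cadj D *v y0"
        unfolding g_def ut_def a0_def a_def y0_def using tpos[of t]
        by (simp add: mv_diff algebra_simps)
      then have "0 \<le> (1/tau t) * inner (a0 - a) a - inner (cadj D *v y0) a"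
        using m unfolding a_def[symmetric] by (simp add: inner_diff_left)
      moreover have "inner (cadj D *v y0) a = inner y0 (D *v a)"
        by (metis ad inner_commute)
      ultimately have "inner y0 (D *v a) \<le> (1/tau t) * inner (a0 - a) a" by simp
      then have "tau t * inner y0 (D *v a) \<le> tau t * ((1/tau t) * inner (a0 - a) a)"
        using tpos[of t] by (intro mult_left_mono) auto
      then show ?thesis using tpos[of t] by simp
    qed
    have Dl: "(\<kappa> t * tau t) *\<^sub>R (D *v (cadj D *v (y - y0)) + \<theta>^2 *\<^sub>R (y - y0)) = D *v a + \<kappa> t *\<^sub>R (D *v (a - a0))"
    proof -
      have "(\<kappa> t * tau t) *\<^sub>R (D *v (cadj D *v (y - y0)) + \<theta>^2 *\<^sub>R (y - y0)) = p (Suc t)"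
        unfolding dy tau_step[symmetric] by (rule dual)
      also have "\<dots> = D *v (u (Suc t) + \<kappa> t *\<^sub>R (a - a0)) - D *v u1" unfolding p_def da u1 ..
      also have "\<dots> = D *v a + \<kappa> t *\<^sub>R (D *v (a - a0))"
        unfolding a_def by (simp add: mv_add mv_diff mv_scaleR algebra_simps)
      finally show ?thesis .
    qed
    have KV: "En u1 l1 t \<ge> ((norm a)^2 + (tau t)^2 * ((norm (cadj D *v y))^2 + \<theta>^2*(norm y)^2) - (2*tau t/\<kappa> t) * inner (D *v a) y) + \<rho> t"
      using key_vec[OF k0 P Dl] unfolding En_def \<rho>_def a0_def[symmetric] y0_def[symmetric] da dy .
    have EN: "En u1 l1 (Suc t) = (\<kappa> t)^2 * ((norm a)^2 + (tau t)^2 * ((norm (cadj D *v y))^2 + \<theta>^2*(norm y)^2) - (2*tau t/\<kappa> t) * inner a (cadj D *v y)) + (1 - (\<kappa> t)^2)*(norm a)^2"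
    proof -
      have "En u1 l1 (Suc t) = (norm (a - (\<kappa> t * tau t) *\<^sub>R (cadj D *v y)))^2 + (\<kappa> t * tau t * \<theta>)^2*(norm y)^2"
        unfolding En_def tau_step a_def y_def by (simp add: algebra_simps)
      also have "\<dots> = (\<kappa> t)^2 * ((norm a)^2 + (tau t)^2 * ((norm (cadj D *v y))^2 + \<theta>^2*(norm y)^2) - (2*tau t/\<kappa> t) * inner a (cadj D *v y)) + (1 - (\<kappa> t)^2)*(norm a)^2"
        by (rule Enext_id) (use k0[of t] in simp)
      finally show ?thesis .
    qed
    have AB: "(norm a)^2 \<le> C1 * En u1 l1 (Suc t)"
    proof -
      have "(norm a)^2 \<le> C1 * ((norm (a - tau (Suc t) *\<^sub>R (cadj D *v y)))^2 + (tau (Suc t)*\<theta>)^2*(norm y)^2)"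
        unfolding C1_def by (rule norm_sq_bound[OF nA]) (use tpos[of "Suc t"] \<theta>_pos nA0 in auto)
      then show ?thesis unfolding En_def a_def y_def by (simp add: algebra_simps)
    qed
    show ?thesis unfolding \<epsilon>_def
    proof (rule case_real[OF _ _ AB En0 \<rho>0 k0 C1 _ En0])
      show "En u1 l1 t \<ge> ((norm a)^2 + (tau t)^2 * ((norm (cadj D *v y))^2 + \<theta>^2*(norm y)^2) - (2*tau t/\<kappa> t) * inner a (cadj D *v y)) + \<rho> t"
        using KV by (simp add: ad)
      show "En u1 l1 (Suc t) = (\<kappa> t)^2 * ((norm a)^2 + (tau t)^2 * ((norm (cadj D *v y))^2 + \<theta>^2*(norm y)^2) - (2*tau t/\<kappa> t) * inner a (cadj D *v y)) + (1 - (\<kappa> t)^2)*(norm a)^2"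
        by (rule EN)
      show "0 \<le> (norm a)^2" by simp
      show "C1 * (1 - (\<kappa> t)^2) \<le> 1/2" if "\<kappa> t < 1"
      proof -
        have "(\<kappa> t)^2 < 1^2" using that k0[of t] by (intro power_strict_mono) auto
        then show ?thesis using T[OF tT] by (simp add: abs_if split: if_splits)
      qed
    qed
  qed
  define B where "B = exp (suminf \<epsilon>) * En us ls T"
  have EnB: "En us ls t \<le> B" if "T \<le> t" for t
    unfolding B_def by (rule qf_bound[OF step[OF us ls] \<rho>0 \<epsilon>0 En0 \<epsilon>sum order_refl that])
  have \<rho>lim: "\<rho> \<longlonglongrightarrow> 0"
    by (rule qf_rho[OF step[OF us ls] \<rho>0 \<epsilon>0 En0 \<epsilon>sum EnB])
  define dd where "dd t = u (Suc t) - u t" for t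
  define de where "de t = lam (Suc t) - lam t" for t
  have cde: "norm (de t) \<le> sqrt (\<rho> t)/(\<tau>l*\<theta>)" and cdd: "norm (dd t) \<le> sqrt (\<rho> t) + \<tau>u*nA*(sqrt (\<rho> t)/(\<tau>l*\<theta>))" for t
    using coerc[of "dd t" "tau t" "cadj D *v de t" \<theta> "de t" "\<rho> t" nA \<tau>l \<tau>u, OF _ nA taub(1) taub(2) \<tau>l0 \<theta>_pos]
      nA0 unfolding \<rho>_def dd_def de_def by auto
  have sq0: "(\<lambda>t. sqrt (\<rho> t)) \<longlonglongrightarrow> 0" using tendsto_real_sqrt[OF \<rho>lim] by simp
  have delim: "de \<longlonglongrightarrow> 0"
  proof (rule Lim_null_comparison[OF _ tendsto_divide_zero[OF sq0]])
    show "\<forall>\<^sub>F t in sequentially. norm (de t) \<le> sqrt (\<rho> t) / (\<tau>l*\<theta>)" using cde by simp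
  qed
  have ddlim: "dd \<longlonglongrightarrow> 0"
  proof (rule Lim_null_comparison)
    show "\<forall>\<^sub>F t in sequentially. norm (dd t) \<le> sqrt (\<rho> t) + \<tau>u*nA*(sqrt (\<rho> t)/(\<tau>l*\<theta>))" using cdd by simp
    show "(\<lambda>t. sqrt (\<rho> t) + \<tau>u*nA*(sqrt (\<rho> t)/(\<tau>l*\<theta>))) \<longlonglongrightarrow> 0"
      using tendsto_add[OF sq0 tendsto_mult_right_zero[OF tendsto_divide_zero[OF sq0]]] by simp
  qed
  define K1 where "K1 = sqrt B/(\<tau>l*\<theta>)"
  define K2 where "K2 = sqrt B + \<tau>u*nA*K1"
  have bl: "norm (lam t - ls) \<le> K1" and bu: "norm (u t - us) \<le> K2" if "T \<le> t" for t
    using coerc[of "u t - us" "tau t" "cadj D *v (lam t - ls)" \<theta> "lam t - ls" B nA \<tau>l \<tau>u, OF _ nA taub(1) taub(2) \<tau>l0 \<theta>_pos]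
      nA0 EnB[OF that] unfolding En_def K1_def K2_def by auto
  define w where "w k = (u (k + T), lam (k + T))" for k
  have "bounded (range w)"
  proof -
    have "range w \<subseteq> cball us K2 \<times> cball ls K1"
      using bl bu unfolding w_def by (auto simp: dist_norm norm_minus_commute)
    moreover have "bounded (cball us K2 \<times> cball ls K1)" by (intro bounded_Times) auto
    ultimately show ?thesis by (rule bounded_subset[rotated])
  qed
  then obtain l r where r: "strict_mono r" and wl: "(w \<circ> r) \<longlonglongrightarrow> l"
    using bounded_imp_convergent_subsequence by blast
  define ub where "ub = fst l"
  define lb where "lb = snd l"
  define r' where "r' k = r k + T" for k
  have r': "strict_mono r'" using r unfolding r'_def strict_mono_def by auto
  have r'T: "T \<le> r' k" for k unfolding r'_def by simp
  have ulim: "(\<lambda>k. u (r' k)) \<longlonglongrightarrow> ub"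
    using tendsto_fst[OF wl] unfolding ub_def w_def r'_def o_def by simp
  have llim: "(\<lambda>k. lam (r' k)) \<longlonglongrightarrow> lb"
    using tendsto_snd[OF wl] unfolding lb_def w_def r'_def o_def by simp
  have ddr: "(\<lambda>k. dd (r' k)) \<longlonglongrightarrow> 0" using LIMSEQ_subseq_LIMSEQ[OF ddlim r'] by (simp add: o_def)
  have der: "(\<lambda>k. de (r' k)) \<longlonglongrightarrow> 0" using LIMSEQ_subseq_LIMSEQ[OF delim r'] by (simp add: o_def)
  have u1lim: "(\<lambda>k. u (Suc (r' k))) \<longlonglongrightarrow> ub"
  proof -
    have "(\<lambda>k. u (r' k) + dd (r' k)) \<longlonglongrightarrow> ub + 0" by (rule tendsto_add[OF ulim ddr])
    then show ?thesis unfolding dd_def by simp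
  qed
  have blD: "bounded_linear (\<lambda>x. D *v x)" using linear_conv_bounded_linear[THEN iffD1, OF mv_linear] .
  have blA: "bounded_linear (\<lambda>x. cadj D *v x)" using linear_conv_bounded_linear[THEN iffD1, OF mv_linear] .
  have feas: "D *v ub = b"
  proof -
    have pz: "(\<lambda>t. p (Suc t)) \<longlonglongrightarrow> 0"
    proof (rule Lim_null_comparison)
      show "\<forall>\<^sub>F t in sequentially. norm (p (Suc t)) \<le> \<tau>u * ((nA*nD + \<theta>^2) * norm (de t))"
      proof (rule always_eventually, rule allI)
        fix t
        have "norm (D *v (cadj D *v de t) + \<theta>^2 *\<^sub>R de t) \<le> norm (D *v (cadj D *v de t)) + norm (\<theta>^2 *\<^sub>R de t)"
          by (rule norm_triangle_ineq)
        also have "norm (D *v (cadj D *v de t)) \<le> norm (de t) * nA * nD"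
        proof -
          have "norm (D *v (cadj D *v de t)) \<le> norm (cadj D *v de t) * nD" by (rule nD)
          also have "\<dots> \<le> norm (de t) * nA * nD" using nA[of "de t"] nD0 by (intro mult_right_mono) auto
          finally show ?thesis .
        qed
        finally have h: "norm (D *v (cadj D *v de t) + \<theta>^2 *\<^sub>R de t) \<le> (nA*nD + \<theta>^2) * norm (de t)"
          by (simp add: algebra_simps)
        have "norm (p (Suc t)) = tau (Suc t) * norm (D *v (cadj D *v de t) + \<theta>^2 *\<^sub>R de t)"
          unfolding dual[of t, symmetric] de_def using tpos[of "Suc t"] by simp
        also have "\<dots> \<le> \<tau>u * ((nA*nD + \<theta>^2) * norm (de t))"
          using h taub(2)[of "Suc t"] tpos[of "Suc t"] by (intro mult_mono) auto
        finally show "norm (p (Suc t)) \<le> \<tau>u * ((nA*nD + \<theta>^2) * norm (de t))" .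
      qed
      show "(\<lambda>t. \<tau>u * ((nA*nD + \<theta>^2) * norm (de t))) \<longlonglongrightarrow> 0"
        using tendsto_norm[OF delim] by (intro tendsto_mult_right_zero) simp
    qed
    then have pz': "(\<lambda>k. p (Suc (r' k))) \<longlonglongrightarrow> 0" using LIMSEQ_subseq_LIMSEQ[OF pz r'] by (simp add: o_def)
    have kd: "(\<lambda>k. \<kappa> (r' k) *\<^sub>R (D *v dd (r' k))) \<longlonglongrightarrow> 0"
    proof (rule Lim_null_comparison)
      show "\<forall>\<^sub>F k in sequentially. norm (\<kappa> (r' k) *\<^sub>R (D *v dd (r' k))) \<le> Mk * (nD * norm (dd (r' k)))"
      proof (rule always_eventually, rule allI)
        fix k
        have "norm (\<kappa> (r' k) *\<^sub>R (D *v dd (r' k))) = \<kappa> (r' k) * norm (D *v dd (r' k))" using k0[of "r' k"] by simp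
        also have "\<dots> \<le> Mk * (nD * norm (dd (r' k)))"
          using kb(2)[of "r' k"] nD[of "dd (r' k)"] k0[of "r' k"] by (intro mult_mono) (auto simp: mult.commute)
        finally show "norm (\<kappa> (r' k) *\<^sub>R (D *v dd (r' k))) \<le> Mk * (nD * norm (dd (r' k)))" .
      qed
      show "(\<lambda>k. Mk * (nD * norm (dd (r' k)))) \<longlonglongrightarrow> 0"
        using tendsto_norm[OF ddr] by (intro tendsto_mult_right_zero) simp
    qed
    have "(\<lambda>k. D *v u (Suc (r' k)) + \<kappa> (r' k) *\<^sub>R (D *v dd (r' k)) - b) \<longlonglongrightarrow> D *v ub + 0 - b"
      by (intro tendsto_diff tendsto_add bounded_linear.tendsto[OF blD] u1lim kd tendsto_const)
    moreover have "D *v u (Suc (r' k)) + \<kappa> (r' k) *\<^sub>R (D *v dd (r' k)) - b = p (Suc (r' k))" for k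
      unfolding p_def dd_def by (simp add: mv_add mv_scaleR)
    ultimately have "(\<lambda>k. p (Suc (r' k))) \<longlonglongrightarrow> D *v ub - b" by simp
    with pz' have "D *v ub - b = 0" using LIMSEQ_unique by blast
    then show ?thesis by simp
  qed
  define gb where "gb = - (cadj D *v lb)"
  have glim: "(\<lambda>k. g (r' k)) \<longlonglongrightarrow> gb"
  proof -
    have geq: "g t = - ((1/tau t) *\<^sub>R dd t) - cadj D *v lam t" for t
      unfolding g_def ut_def dd_def using tpos[of t] by (simp add: algebra_simps)
    have z: "(\<lambda>k. (1/tau (r' k)) *\<^sub>R dd (r' k)) \<longlonglongrightarrow> 0"
    proof (rule Lim_null_comparison)
      show "\<forall>\<^sub>F k in sequentially. norm ((1/tau (r' k)) *\<^sub>R dd (r' k)) \<le> (1/\<tau>l) * norm (dd (r' k))"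
      proof (rule always_eventually, rule allI)
        fix k
        have "norm (dd (r' k)) / tau (r' k) \<le> norm (dd (r' k)) / \<tau>l"
          using taub(1)[of "r' k"] \<tau>l0 tpos[of "r' k"] by (intro divide_left_mono) auto
        then show "norm ((1/tau (r' k)) *\<^sub>R dd (r' k)) \<le> (1/\<tau>l) * norm (dd (r' k))"
          using tpos[of "r' k"] by simp
      qed
      show "(\<lambda>k. (1/\<tau>l) * norm (dd (r' k))) \<longlonglongrightarrow> 0"
        using tendsto_norm[OF ddr] by (intro tendsto_mult_right_zero) simp
    qed
    have "(\<lambda>k. - ((1/tau (r' k)) *\<^sub>R dd (r' k)) - cadj D *v lam (r' k)) \<longlonglongrightarrow> - 0 - cadj D *v lb"
      by (intro tendsto_diff tendsto_minus z bounded_linear.tendsto[OF blA] llim)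
    then show ?thesis unfolding geq gb_def by simp
  qed
  have epil: "f ub \<le> ereal (Fv - inner gb (v - ub))" if fv: "f v = ereal Fv" for v Fv
  proof -
    have mem: "(u (Suc (r' k)), Fv - inner (g (r' k)) (v - u (Suc (r' k)))) \<in> {(u, s::real). f u \<le> ereal s}" for k
    proof -
      have "f (u (Suc (r' k))) + ereal (inner (g (r' k)) (v - u (Suc (r' k)))) \<le> f v"
        using gsub[of "r' k"] unfolding subdiff_def by blast
      then show ?thesis using fv nm[of "u (Suc (r' k))"] by (cases "f (u (Suc (r' k)))") auto
    qed
    have "(\<lambda>k. (u (Suc (r' k)), Fv - inner (g (r' k)) (v - u (Suc (r' k))))) \<longlonglongrightarrow> (ub, Fv - inner gb (v - ub))"
      by (intro tendsto_intros u1lim glim)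
    then have "(ub, Fv - inner gb (v - ub)) \<in> {(u, s::real). f u \<le> ereal s}"
      by (rule closed_sequentially[OF f_closed[unfolded closed_fun_def] mem])
    then show ?thesis by simp
  qed
  have lsub: "gb \<in> subdiff f ub"
  proof -
    have "ereal (Fus - inner gb (us - ub)) < \<infinity>" by simp
    then have fub: "f ub < \<infinity>" by (rule order_le_less_trans[OF epil[OF Fus]])
    then obtain Fub where Fub: "f ub = ereal Fub" using nm[of ub] by (cases "f ub") auto
    have "f ub + ereal (inner gb (v - ub)) \<le> f v" for v
    proof (cases "f v")
      case (real Fv)
      then show ?thesis using epil[OF real] Fub by simp
    next
      case PInf then show ?thesis by simp
    next
      case MInf then show ?thesis using nm by simp
    qed
    then show ?thesis unfolding subdiff_def using fub by blast
  qed
  have opt: "f ub \<le> f v" if "D *v v = b" for v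
  proof -
    have "inner gb (v - ub) = 0"
    proof -
      have "inner gb (v - ub) = - inner (D *v (v - ub)) lb"
        unfolding gb_def inner_minus_left inner_commute[of "cadj D *v lb"] adjoint[symmetric] ..
      also have "D *v (v - ub) = 0" using that feas by (simp add: mv_diff)
      finally show ?thesis by simp
    qed
    moreover have "f ub + ereal (inner gb (v - ub)) \<le> f v" using lsub unfolding subdiff_def by blast
    ultimately show ?thesis by simp
  qed
  define Eb where "Eb = En ub lb"
  have stepb: "\<And>t. T \<le> t \<Longrightarrow> Eb (Suc t) \<le> (1 + \<epsilon> t) * Eb t - \<rho> t"
    unfolding Eb_def by (rule step[OF feas lsub[unfolded gb_def]])
  have Eb0: "\<And>t. 0 \<le> Eb t" unfolding Eb_def by (rule En0)
  have Ebr: "(\<lambda>k. Eb (r' k)) \<longlonglongrightarrow> 0"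
  proof (rule Lim_null_comparison)
    define X where "X k = norm (u (r' k) - ub) + \<tau>u*nA*norm (lam (r' k) - lb)" for k
    show "\<forall>\<^sub>F k in sequentially. norm (Eb (r' k)) \<le> (X k)^2 + (\<tau>u*\<theta>)^2 * (norm (lam (r' k) - lb))^2"
    proof (rule always_eventually, rule allI)
      fix k
      let ?t = "r' k"
      have "norm (u ?t - ub - tau ?t *\<^sub>R (cadj D *v (lam ?t - lb))) \<le> norm (u ?t - ub) + norm (tau ?t *\<^sub>R (cadj D *v (lam ?t - lb)))"
        by (rule norm_triangle_ineq4)
      also have "norm (tau ?t *\<^sub>R (cadj D *v (lam ?t - lb))) \<le> \<tau>u*nA*norm (lam ?t - lb)"
      proof -
        have "norm (tau ?t *\<^sub>R (cadj D *v (lam ?t - lb))) = tau ?t * norm (cadj D *v (lam ?t - lb))"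
          using tpos[of ?t] by simp
        also have "\<dots> \<le> \<tau>u * (norm (lam ?t - lb) * nA)"
          using taub(2)[of ?t] nA[of "lam ?t - lb"] tpos[of ?t] by (intro mult_mono) auto
        finally show ?thesis by (simp add: algebra_simps)
      qed
      finally have h1: "norm (u ?t - ub - tau ?t *\<^sub>R (cadj D *v (lam ?t - lb))) \<le> X k" unfolding X_def by simp
      have h2: "(norm (u ?t - ub - tau ?t *\<^sub>R (cadj D *v (lam ?t - lb))))^2 \<le> (X k)^2"
        using h1 by (intro power_mono) auto
      have h3: "(tau ?t*\<theta>)^2 \<le> (\<tau>u*\<theta>)^2" using taub(2)[of ?t] tpos[of ?t] \<theta>_pos by (intro power_mono) auto
      have "(tau ?t*\<theta>)^2 * (norm (lam ?t - lb))^2 \<le> (\<tau>u*\<theta>)^2 * (norm (lam ?t - lb))^2"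
        using h3 by (intro mult_right_mono) auto
      then show "norm (Eb ?t) \<le> (X k)^2 + (\<tau>u*\<theta>)^2 * (norm (lam ?t - lb))^2"
        using h2 En0[of ub lb ?t] unfolding Eb_def En_def by simp
    qed
    have ul: "(\<lambda>k. u (r' k) - ub) \<longlonglongrightarrow> 0" using ulim by (simp add: LIM_zero)
    have ll: "(\<lambda>k. lam (r' k) - lb) \<longlonglongrightarrow> 0" using llim by (simp add: LIM_zero)
    have "X \<longlonglongrightarrow> 0 + \<tau>u*nA*0" unfolding X_def
      using tendsto_norm[OF ul] tendsto_norm[OF ll] by (intro tendsto_intros) auto
    then have "X \<longlonglongrightarrow> 0" by simp
    then show "(\<lambda>k. (X k)^2 + (\<tau>u*\<theta>)^2 * (norm (lam (r' k) - lb))^2) \<longlonglongrightarrow> 0"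
    proof -
      have n2: "(\<lambda>k. (norm (lam (r' k) - lb))^2) \<longlonglongrightarrow> 0" using tendsto_power[OF tendsto_norm[OF ll], of 2] by simp
      have x2: "(\<lambda>k. (X k)^2) \<longlonglongrightarrow> 0" using tendsto_power[OF \<open>X \<longlonglongrightarrow> 0\<close>, of 2] by simp
      show ?thesis using tendsto_add[OF x2 tendsto_mult_right_zero[OF n2, of "(\<tau>u*\<theta>)^2"]] by simp
    qed
  qed
  have Eblim: "Eb \<longlonglongrightarrow> 0"
  proof (rule LIMSEQ_I)
    fix e :: real assume e: "0 < e"
    have "0 < e / exp (suminf \<epsilon>)" using e by simp
    then have "eventually (\<lambda>k. dist (Eb (r' k)) 0 < e / exp (suminf \<epsilon>)) sequentially"
      using Ebr[unfolded tendsto_iff] by blast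
    then have "eventually (\<lambda>k. norm (Eb (r' k)) < e / exp (suminf \<epsilon>)) sequentially"
      by (simp add: dist_norm)
    then obtain k where k: "norm (Eb (r' k)) < e / exp (suminf \<epsilon>)" unfolding eventually_sequentially by blast
    have "norm (Eb t - 0) < e" if "r' k \<le> t" for t
    proof -
      have "Eb t \<le> exp (suminf \<epsilon>) * Eb (r' k)"
        by (rule qf_bound[OF stepb \<rho>0 \<epsilon>0 Eb0 \<epsilon>sum r'T that])
      also have "\<dots> < exp (suminf \<epsilon>) * (e / exp (suminf \<epsilon>))"
        using k En0[of ub lb "r' k"] unfolding Eb_def by (intro mult_strict_left_mono) auto
      also have "\<dots> = e" by simp
      finally show ?thesis using En0[of ub lb t] unfolding Eb_def by simp
    qed
    then show "\<exists>N. \<forall>t\<ge>N. norm (Eb t - 0) < e" by blast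
  qed
  have "(\<lambda>t. u t - ub) \<longlonglongrightarrow> 0"
  proof (rule Lim_null_comparison)
    show "\<forall>\<^sub>F t in sequentially. norm (u t - ub) \<le> sqrt (Eb t) + \<tau>u*nA*(sqrt (Eb t)/(\<tau>l*\<theta>))"
    proof (rule always_eventually, rule allI)
      fix t
      show "norm (u t - ub) \<le> sqrt (Eb t) + \<tau>u*nA*(sqrt (Eb t)/(\<tau>l*\<theta>))"
        using coerc(2)[of "u t - ub" "tau t" "cadj D *v (lam t - lb)" \<theta> "lam t - lb" "Eb t" nA \<tau>l \<tau>u, OF _ nA taub(1) taub(2) \<tau>l0 \<theta>_pos]
          nA0 unfolding Eb_def En_def by auto
    qed
    have sE: "(\<lambda>t. sqrt (Eb t)) \<longlonglongrightarrow> 0" using tendsto_real_sqrt[OF Eblim] by simp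
    show "(\<lambda>t. sqrt (Eb t) + \<tau>u*nA*(sqrt (Eb t)/(\<tau>l*\<theta>))) \<longlonglongrightarrow> 0"
      using tendsto_add[OF sE tendsto_mult_right_zero[OF tendsto_divide_zero[OF sE]]] by simp
  qed
  then have "u \<longlonglongrightarrow> ub" by (simp add: LIM_zero_iff)
  then show ?thesis using feas opt by blast
qed

end
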